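(* Let $N,T\ge 1$, let $p_1,\dots,p_N\in[0,1]$, and let $\mathbf U=(U_1,\dots,U_N)$ have independent coordinates $U_i\sim\mathrm{Ber}(p_i)$. Let $G\in\{0,1\}^{T\times N}$ be a fixed testing matrix, with test results $Y_t=1-\prod_{i=1}^N(1-G_{ti}U_i)$ for $t=1,\dots,T$, and DND estimate $\widehat U_i=\prod_{t=1}^T Y_t^{G_{ti}}$ (with $0^0=1$). Define the expected number of errors $$\mathcal E(G)\triangleq\mathbb E\Big[\sum_{i=1}^N \mathbb 1\{\widehat U_i\neq U_i\}\Big].$$ Then $\mathcal E(G)\ge \mathcal E_{LB}(G)$, where $$\mathcal E_{LB}(G)\triangleq\sum_{i=1}^N(1-p_i)\prod_{t=1}^T\Big(1-G_{ti}\prod_{j=1,\,j\neq i}^N(1-G_{tj}p_j)\Big).$$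
   Context: Group testing setup: $N$ individuals, individual $i$ infected ($U_i=1$) independently with known prior probability $p_i$; $G_{ti}=1$ means individual $i$ participates in test $t$; a test is positive iff it contains an infected participant. The Definite Non-Defectives (DND) decoder declares individual $i$ healthy iff $i$ participates in at least one negative test, and infected otherwise. *)

theory Defs
  imports "HOL-Probability.Probability"
begin

text \<open>Individuals are indexed by 0..N-1, tests by 0..T-1.
  G t i is the (0/1-valued) entry of the testing matrix; u i is the infection status.\<close>

definition test_result :: "nat \<Rightarrow> (nat \<Rightarrow> nat \<Rightarrow> nat) \<Rightarrow> (nat \<Rightarrow> bool) \<Rightarrow> nat \<Rightarrow> real" where
  "test_result N G u t = 1 - (\<Prod>i<N. (1 - real (G t i) * of_bool (u i)))"

definition dnd_estimate :: "nat \<Rightarrow> nat \<Rightarrow> (nat \<Rightarrow> nat \<Rightarrow> nat) \<Rightarrow> (nat \<Rightarrow> bool) \<Rightarrow> nat \<Rightarrow> real" where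
  "dnd_estimate N T G u i = (\<Prod>t<T. (test_result N G u t) ^ (G t i))"

definition num_errors :: "nat \<Rightarrow> nat \<Rightarrow> (nat \<Rightarrow> nat \<Rightarrow> nat) \<Rightarrow> (nat \<Rightarrow> bool) \<Rightarrow> real" where
  "num_errors N T G u = (\<Sum>i<N. of_bool (dnd_estimate N T G u i \<noteq> of_bool (u i)))"

definition prior_pmf :: "nat \<Rightarrow> (nat \<Rightarrow> real) \<Rightarrow> (nat \<Rightarrow> bool) pmf" where
  "prior_pmf N p = Pi_pmf {..<N} False (\<lambda>i. bernoulli_pmf (p i))"

definition expected_errors :: "nat \<Rightarrow> nat \<Rightarrow> (nat \<Rightarrow> real) \<Rightarrow> (nat \<Rightarrow> nat \<Rightarrow> nat) \<Rightarrow> real" where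
  "expected_errors N T p G = measure_pmf.expectation (prior_pmf N p) (num_errors N T G)"

definition errors_LB :: "nat \<Rightarrow> nat \<Rightarrow> (nat \<Rightarrow> real) \<Rightarrow> (nat \<Rightarrow> nat \<Rightarrow> nat) \<Rightarrow> real" where
  "errors_LB N T p G = (\<Sum>i<N. (1 - p i) *
     (\<Prod>t<T. (1 - real (G t i) * (\<Prod>j\<in>{..<N} - {i}. (1 - real (G t j) * p j)))))"

end

theory Submission
  imports Defs
begin

abbreviation BP :: "nat set \<Rightarrow> (nat \<Rightarrow> real) \<Rightarrow> (nat \<Rightarrow> bool) pmf" where
  "BP A q \<equiv> Pi_pmf A False (\<lambda>i. bernoulli_pmf (q i))"

lemma fin_BP: "finite A \<Longrightarrow> finite (set_pmf (BP A q))"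
  apply (rule finite_subset[OF set_Pi_pmf_subset'])
   apply assumption
  apply (rule finite_PiE_dflt)
  by auto

lemma int_BP[simp, intro]: "finite A \<Longrightarrow> integrable (measure_pmf (BP A q)) (f :: _ \<Rightarrow> real)"
  by (rule integrable_measure_pmf_finite[OF fin_BP])

lemma exp_pair:
  fixes f :: "'a \<times> 'b \<Rightarrow> real"
  assumes fa: "finite (set_pmf A)" and fb: "finite (set_pmf B)"
  shows "measure_pmf.expectation (pair_pmf A B) f =
         measure_pmf.expectation A (\<lambda>a. measure_pmf.expectation B (\<lambda>b. f (a,b)))"
proof -
  have "measure_pmf.expectation (pair_pmf A B) f = (\<Sum>x\<in>set_pmf A \<times> set_pmf B. f x * pmf (pair_pmf A B) x)"
    by (rule integral_measure_pmf_real) (use fa fb in auto)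
  also have "\<dots> = (\<Sum>a\<in>set_pmf A. \<Sum>b\<in>set_pmf B. f (a,b) * (pmf A a * pmf B b))"
    by (subst sum.cartesian_product) (auto intro!: sum.cong simp: pmf_pair)
  also have "\<dots> = (\<Sum>a\<in>set_pmf A. (\<Sum>b\<in>set_pmf B. f (a,b) * pmf B b) * pmf A a)"
    by (rule sum.cong[OF refl]) (simp add: sum_distrib_right sum_distrib_left mult_ac)
  also have "\<dots> = measure_pmf.expectation A (\<lambda>a. measure_pmf.expectation B (\<lambda>b. f (a,b)))"
  proof -
    have "\<And>a. measure_pmf.expectation B (\<lambda>b. f (a,b)) = (\<Sum>b\<in>set_pmf B. f (a,b) * pmf B b)"
      by (rule integral_measure_pmf_real) (use fb in auto)
    moreover have "measure_pmf.expectation A (\<lambda>a. measure_pmf.expectation B (\<lambda>b. f (a,b)))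
       = (\<Sum>a\<in>set_pmf A. measure_pmf.expectation B (\<lambda>b. f (a,b)) * pmf A a)"
      by (rule integral_measure_pmf_real) (use fa in auto)
    ultimately show ?thesis by simp
  qed
  finally show ?thesis .
qed

lemma exp_insert:
  fixes f :: "(nat \<Rightarrow> bool) \<Rightarrow> real"
  assumes "finite A" "x \<notin> A"
  shows "measure_pmf.expectation (BP (insert x A) q) f =
    measure_pmf.expectation (bernoulli_pmf (q x)) (\<lambda>y. measure_pmf.expectation (BP A q) (\<lambda>u. f (u(x:=y))))"
proof -
  have "measure_pmf.expectation (BP (insert x A) q) f =
     measure_pmf.expectation (pair_pmf (bernoulli_pmf (q x)) (BP A q)) (\<lambda>(y,u). f (u(x:=y)))"
    by (simp add: Pi_pmf_insert[OF assms] case_prod_unfold)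
  also have "\<dots> = measure_pmf.expectation (bernoulli_pmf (q x)) (\<lambda>y. measure_pmf.expectation (BP A q) (\<lambda>u. f (u(x:=y))))"
    by (rule exp_pair[where f="\<lambda>(y,u). f (u(x:=y))", simplified]) (auto intro: fin_BP assms finite_subset[OF subset_UNIV])
  finally show ?thesis .
qed

lemma harris:
  fixes f g :: "(nat \<Rightarrow> bool) \<Rightarrow> real"
  assumes "finite A" "mono f" "mono g" "\<forall>x\<in>A. 0 \<le> q x \<and> q x \<le> 1"
  shows "measure_pmf.expectation (BP A q) (\<lambda>u. f u * g u) \<ge>
         measure_pmf.expectation (BP A q) f * measure_pmf.expectation (BP A q) g"
  using assms
proof (induction A arbitrary: f g rule: finite_induct)
  case empty
  then show ?case by simp
next
  case (insert x A)
  let ?M = "BP A q"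
  have mupd: "mono (\<lambda>u. h (u(x:=y)))" if "mono h" for h :: "(nat \<Rightarrow> bool) \<Rightarrow> real" and y
    by (rule monoI, rule monoD[OF that]) (auto simp: le_fun_def)
  define F where "F y = measure_pmf.expectation ?M (\<lambda>u. f (u(x:=y)))" for y
  define Gg where "Gg y = measure_pmf.expectation ?M (\<lambda>u. g (u(x:=y)))" for y
  define H where "H y = measure_pmf.expectation ?M (\<lambda>u. f (u(x:=y)) * g (u(x:=y)))" for y
  have IH: "H y \<ge> F y * Gg y" for y
    unfolding H_def F_def Gg_def
    by (rule insert.IH[OF mupd[OF insert.prems(1)] mupd[OF insert.prems(2)]]) (use insert.prems in auto)
  have monoE: "measure_pmf.expectation ?M (\<lambda>u. h (u(x:=False))) \<le> measure_pmf.expectation ?M (\<lambda>u. h (u(x:=True)))" if "mono h"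
    for h :: "(nat \<Rightarrow> bool) \<Rightarrow> real"
    by (rule integral_mono) (auto intro!: monoD[OF that(1)] simp: insert.hyps le_fun_def)
  have FF: "F False \<le> F True" unfolding F_def by (rule monoE[OF insert.prems(1)])
  have GG: "Gg False \<le> Gg True" unfolding Gg_def by (rule monoE[OF insert.prems(2)])
  have q: "0 \<le> q x" "q x \<le> 1" using insert.prems by auto
  have e1: "measure_pmf.expectation (BP (insert x A) q) (\<lambda>u. f u * g u) = H True * q x + H False * (1 - q x)"
    by (simp add: exp_insert insert.hyps q H_def)
  have e2: "measure_pmf.expectation (BP (insert x A) q) f = F True * q x + F False * (1 - q x)"
    by (simp add: exp_insert insert.hyps q F_def)
  have e3: "measure_pmf.expectation (BP (insert x A) q) g = Gg True * q x + Gg False * (1 - q x)"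
    by (simp add: exp_insert insert.hyps q Gg_def)
  have "H True * q x + H False * (1 - q x) \<ge> F True * Gg True * q x + F False * Gg False * (1 - q x)"
    by (intro add_mono mult_right_mono IH) (use q in auto)
  moreover have "F True * Gg True * q x + F False * Gg False * (1 - q x)
      - (F True * q x + F False * (1 - q x)) * (Gg True * q x + Gg False * (1 - q x))
      = q x * (1 - q x) * (F True - F False) * (Gg True - Gg False)"
    by (simp add: algebra_simps)
  moreover have "q x * (1 - q x) * (F True - F False) * (Gg True - Gg False) \<ge> 0"
    using q FF GG by (intro mult_nonneg_nonneg) auto
  ultimately show ?case unfolding e1 e2 e3 by linarith
qed


lemma mono_prod_fun:
  fixes h :: "nat \<Rightarrow> (nat \<Rightarrow> bool) \<Rightarrow> real"
  assumes "\<And>t. t \<in> I \<Longrightarrow> mono (h t)" "\<And>t u. t \<in> I \<Longrightarrow> 0 \<le> h t u"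
  shows "mono (\<lambda>u. \<Prod>t\<in>I. h t u)"
  by (rule monoI, rule prod_mono) (use assms in \<open>auto dest: monoD\<close>)

lemma harris_prod:
  fixes h :: "nat \<Rightarrow> (nat \<Rightarrow> bool) \<Rightarrow> real"
  assumes "finite I" "finite A" "\<forall>x\<in>A. 0 \<le> q x \<and> q x \<le> 1"
    "\<And>t. t \<in> I \<Longrightarrow> mono (h t)" "\<And>t u. t \<in> I \<Longrightarrow> 0 \<le> h t u"
  shows "measure_pmf.expectation (BP A q) (\<lambda>u. \<Prod>t\<in>I. h t u) \<ge>
         (\<Prod>t\<in>I. measure_pmf.expectation (BP A q) (h t))"
  using assms
proof (induction I rule: finite_induct)
  case empty
  then show ?case by simp
next
  case (insert x I)
  have "measure_pmf.expectation (BP A q) (\<lambda>u. \<Prod>t\<in>insert x I. h t u)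
      = measure_pmf.expectation (BP A q) (\<lambda>u. h x u * (\<Prod>t\<in>I. h t u))"
    using insert.hyps by simp
  also have "\<dots> \<ge> measure_pmf.expectation (BP A q) (h x) * measure_pmf.expectation (BP A q) (\<lambda>u. \<Prod>t\<in>I. h t u)"
    by (rule harris[where f="h x" and g="\<lambda>u. \<Prod>t\<in>I. h t u", simplified])
       (use insert.prems in \<open>auto intro!: mono_prod_fun\<close>)
  moreover have "measure_pmf.expectation (BP A q) (h x) * measure_pmf.expectation (BP A q) (\<lambda>u. \<Prod>t\<in>I. h t u)
     \<ge> measure_pmf.expectation (BP A q) (h x) * (\<Prod>t\<in>I. measure_pmf.expectation (BP A q) (h t))"
    by (rule mult_left_mono) (use insert in \<open>auto intro!: Bochner_Integration.integral_nonneg\<close>)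
  ultimately show ?case using insert.hyps by simp
qed


theorem theorem1:
  fixes N T :: nat and p :: "nat \<Rightarrow> real" and G :: "nat \<Rightarrow> nat \<Rightarrow> nat"
  assumes "N \<ge> 1" and "T \<ge> 1"
    and "\<And>i. i < N \<Longrightarrow> 0 \<le> p i \<and> p i \<le> 1"
    and "\<And>t i. t < T \<Longrightarrow> i < N \<Longrightarrow> G t i \<le> 1"
  shows "expected_errors N T p G \<ge> errors_LB N T p G"
proof -
  note pr = assms(3) and G01 = assms(4)
  define A where "A = {..<N}"
  have finA: "finite A" unfolding A_def by simp
  have M: "prior_pmf N p = BP A p" unfolding prior_pmf_def A_def ..
  define err :: "nat \<Rightarrow> (nat \<Rightarrow> bool) \<Rightarrow> real" where "err i u = of_bool (dnd_estimate N T G u i \<noteq> of_bool (u i))" for i u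
  have E_sum: "expected_errors N T p G = (\<Sum>i<N. measure_pmf.expectation (BP A p) (err i))"
    unfolding expected_errors_def M num_errors_def err_def
    by (rule Bochner_Integration.integral_sum) (simp add: finA)
  have key: "(1 - p i) * (\<Prod>t<T. (1 - real (G t i) * (\<Prod>j\<in>{..<N} - {i}. (1 - real (G t j) * p j))))
      \<le> measure_pmf.expectation (BP A p) (err i)" if i: "i < N" for i
  proof -
    define B where "B = A - {i}"
    have finB: "finite B" unfolding B_def using finA by simp
    have AB: "A = insert i B" "i \<notin> B" unfolding B_def A_def using i by auto
    define c where "c t j v = 1 - real (G t j) * of_bool v" for t j v
    define h where "h t u = 1 - real (G t i) * (\<Prod>j\<in>B. c t j (u j))" for t u
    have Gij: "G t j = 0 \<or> G t j = 1" if "t < T" "j \<in> A" for t j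
      using G01[of t j] that unfolding A_def by auto
    have c01: "0 \<le> c t j v \<and> c t j v \<le> 1" if "t < T" "j \<in> B" for t j v
      using Gij[of t j] that unfolding c_def B_def by auto
    have P01: "0 \<le> (\<Prod>j\<in>B. c t j (u j)) \<and> (\<Prod>j\<in>B. c t j (u j)) \<le> 1" if "t < T" for t u
      using c01 that by (auto intro: prod_nonneg prod_le_1)
    have h01: "0 \<le> h t u \<and> h t u \<le> 1" if "t < T" for t u
    proof -
      have "G t i = 0 \<or> G t i = 1" using Gij[of t i] that AB by auto
      then show ?thesis using P01[OF that, of u] unfolding h_def by auto
    qed
    have hmono: "mono (h t)" if "t < T" for t
    proof (rule monoI)
      fix u v :: "nat \<Rightarrow> bool" assume uv: "u \<le> v"
      have "(\<Prod>j\<in>B. c t j (v j)) \<le> (\<Prod>j\<in>B. c t j (u j))"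
      proof (rule prod_mono)
        fix j assume j: "j \<in> B"
        have "of_bool (u j) \<le> (of_bool (v j) :: real)" using uv by (auto simp: le_fun_def)
        then show "0 \<le> c t j (v j) \<and> c t j (v j) \<le> c t j (u j)"
          using c01[OF that j] unfolding c_def by (auto intro: mult_left_mono)
      qed
      then show "h t u \<le> h t v" unfolding h_def by (auto intro: mult_left_mono)
    qed
    have hupd: "h t (u(i:=y)) = h t u" for t u y
      unfolding h_def using AB by (auto intro!: prod.cong)
    have pw: "err i u \<ge> of_bool (\<not> u i) * (\<Prod>t<T. h t u)" for u
    proof (cases "u i \<or> (\<exists>t<T. h t u = 0)")
      case True
      then have z: "of_bool (\<not> u i) * (\<Prod>t<T. h t u) = 0"
      proof
        assume "\<exists>t<T. h t u = 0"
        then have "(\<Prod>t<T. h t u) = 0" by (intro prod_zero) auto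
        then show ?thesis by simp
      qed simp
      show ?thesis unfolding z err_def by simp
    next
      case False
      have "test_result N G u t ^ G t i = 1" if t: "t < T" for t
      proof (cases "G t i = 0")
        case False
        then have G1: "G t i = 1" using Gij[of t i] t AB by auto
        have "h t u \<noteq> 0" using \<open>\<not> (u i \<or> (\<exists>t<T. h t u = 0))\<close> t by auto
        then have "(\<Prod>j\<in>B. c t j (u j)) \<noteq> 1" unfolding h_def G1 by auto
        then have "(\<Prod>j\<in>B. c t j (u j)) = 0"
        proof -
          have "\<forall>j\<in>B. c t j (u j) = 0 \<or> c t j (u j) = 1"
            using t unfolding c_def B_def by (auto dest: Gij[of t])
          then show ?thesis using \<open>(\<Prod>j\<in>B. c t j (u j)) \<noteq> 1\<close> finB
            by (metis (no_types, lifting) prod.neutral prod_zero_iff)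
        qed
        then obtain j where j: "j \<in> B" "c t j (u j) = 0" using finB by auto
        have "(\<Prod>k<N. (1 - real (G t k) * of_bool (u k))) = 0"
        proof (rule prod_zero)
          show "\<exists>k\<in>{..<N}. 1 - real (G t k) * of_bool (u k) = 0"
            using j unfolding c_def B_def A_def by (intro bexI[of _ j]) auto
        qed simp
        then show ?thesis unfolding test_result_def G1 by simp
      qed simp
      then have "dnd_estimate N T G u i = 1" unfolding dnd_estimate_def by simp
      then have "err i u = 1" using False unfolding err_def by simp
      moreover have "(\<Prod>t<T. h t u) \<le> 1" using h01 by (auto intro: prod_le_1)
      ultimately show ?thesis by simp
    qed
    have "measure_pmf.expectation (BP A p) (err i) \<ge>
          measure_pmf.expectation (BP A p) (\<lambda>u. of_bool (\<not> u i) * (\<Prod>t<T. h t u))"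
      by (rule integral_mono) (use pw finA in auto)
    moreover have "measure_pmf.expectation (BP A p) (\<lambda>u. of_bool (\<not> u i) * (\<Prod>t<T. h t u))
       = (1 - p i) * measure_pmf.expectation (BP B p) (\<lambda>u. \<Prod>t<T. h t u)"
      using pr[OF i] by (simp add: AB exp_insert finB hupd)
    moreover have "measure_pmf.expectation (BP B p) (\<lambda>u. \<Prod>t<T. h t u) \<ge>
         (\<Prod>t<T. measure_pmf.expectation (BP B p) (h t))"
      by (rule harris_prod) (use finB pr h01 hmono in \<open>auto simp: B_def A_def\<close>)
    moreover have "measure_pmf.expectation (BP B p) (h t) =
        1 - real (G t i) * (\<Prod>j\<in>{..<N} - {i}. (1 - real (G t j) * p j))" if t: "t < T" for t
    proof -
      have "measure_pmf.expectation (BP B p) (\<lambda>u. \<Prod>j\<in>B. c t j (u j)) =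
            (\<Prod>j\<in>B. measure_pmf.expectation (bernoulli_pmf (p j)) (c t j))"
        by (rule expectation_prod_Pi_pmf) (use finB c01[OF t] in \<open>auto intro: integrable_measure_pmf_finite\<close>)
      also have "\<dots> = (\<Prod>j\<in>{..<N} - {i}. (1 - real (G t j) * p j))"
        using pr unfolding B_def A_def c_def by (intro prod.cong) (auto simp: algebra_simps)
      finally have e: "measure_pmf.expectation (BP B p) (\<lambda>u. \<Prod>j\<in>B. c t j (u j)) = \<dots>" .
      have "measure_pmf.expectation (BP B p) (h t) =
           measure_pmf.expectation (BP B p) (\<lambda>u. 1) - real (G t i) * measure_pmf.expectation (BP B p) (\<lambda>u. \<Prod>j\<in>B. c t j (u j))"
        unfolding h_def
        by (subst Bochner_Integration.integral_diff) (auto simp: finB)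
      then show ?thesis using e by simp
    qed
    ultimately show ?thesis using pr[OF i]
      by (smt (verit) mult_left_mono prod.cong lessThan_iff)
  qed
  show ?thesis unfolding E_sum errors_LB_def
    by (rule sum_mono) (use key in auto)
qed

end
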